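(* Let $\mathcal H_1,\mathcal H_2$ be Hilbert spaces with unitaries $U_1\in B(\mathcal H_1)$, $U_2\in B(\mathcal H_2)$, and let $\phi:B(\mathcal H_1)\to B(\mathcal H_2)$ be a linear map such that for all $V\in B(\mathcal H_1)$, $$\phi(U_1^*V)=U_2^*\phi(V)\quad\text{and}\quad\phi(U_1V)=U_2\phi(V).$$ Then $\phi$ is completely positive if and only if $\phi$ is $(U_1,U_2)$-CP.
   Context: An operator $V$ on a Hilbert space with a given unitary $U$ is $U$-positive if $U^*V\ge0$. For $l\in\mathbb N$, $U^l=\mathrm{diag}(U,\dots,U)$ acting on $\mathcal H^l$. A linear map $\phi:B(\mathcal H_1)\to B(\mathcal H_2)$ is $(U_1,U_2)$-CP if for every $l\in\mathbb N$ and every $V=[V_{ij}]\in M_l(B(\mathcal H_1))$ with $(U_1^l)^*V\ge0$, one has $(U_2^l)^*[\phi(V_{ij})]\ge0$. *)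

theory Defs
  imports Complex_Main
begin

class hilbert_cx = ab_group_add +
  fixes scaleC :: "complex \<Rightarrow> 'a \<Rightarrow> 'a"
    and cinner :: "'a \<Rightarrow> 'a \<Rightarrow> complex"
  assumes scaleC_add_right: "scaleC a (x + y) = scaleC a x + scaleC a y"
    and scaleC_add_left: "scaleC (a + b) x = scaleC a x + scaleC b x"
    and scaleC_scaleC: "scaleC a (scaleC b x) = scaleC (a * b) x"
    and scaleC_one: "scaleC 1 x = x"
    and cinner_conj: "cinner x y = cnj (cinner y x)"
    and cinner_add_right: "cinner x (y + z) = cinner x y + cinner x z"
    and cinner_scaleC_right: "cinner x (scaleC c y) = c * cinner x y"
    and cinner_ge_zero: "0 \<le> Re (cinner x x)"
    and cinner_eq_zero_iff: "cinner x x = 0 \<longleftrightarrow> x = 0"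
    and complete: "(\<forall>e>0. \<exists>N::nat. \<forall>m\<ge>N. \<forall>n\<ge>N. Re (cinner (X m - X n) (X m - X n)) < e)
        \<Longrightarrow> (\<exists>L. \<forall>e>0. \<exists>N::nat. \<forall>n\<ge>N. Re (cinner (X n - L) (X n - L)) < e)"

definition cnorm :: "'a::hilbert_cx \<Rightarrow> real" where
  "cnorm x = sqrt (Re (cinner x x))"

definition bop :: "('a::hilbert_cx \<Rightarrow> 'a) set" where
  "bop = {A. (\<forall>x y. A (x + y) = A x + A y) \<and> (\<forall>c x. A (scaleC c x) = scaleC c (A x))
             \<and> (\<exists>K. \<forall>x. cnorm (A x) \<le> K * cnorm x)}"

definition adj :: "('a::hilbert_cx \<Rightarrow> 'a) \<Rightarrow> ('a \<Rightarrow> 'a)" where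
  "adj A = (THE B. B \<in> bop \<and> (\<forall>x y. cinner (A x) y = cinner x (B y)))"

definition unitary :: "('a::hilbert_cx \<Rightarrow> 'a) \<Rightarrow> bool" where
  "unitary U \<longleftrightarrow> U \<in> bop \<and> U \<circ> adj U = id \<and> adj U \<circ> U = id"

definition cnonneg :: "complex \<Rightarrow> bool" where
  "cnonneg z \<longleftrightarrow> Im z = 0 \<and> 0 \<le> Re z"

definition opmat_pos :: "nat \<Rightarrow> (nat \<Rightarrow> nat \<Rightarrow> ('a::hilbert_cx \<Rightarrow> 'a)) \<Rightarrow> bool" where
  "opmat_pos l V \<longleftrightarrow> (\<forall>x::nat \<Rightarrow> 'a. cnonneg (\<Sum>i<l. \<Sum>j<l. cinner (x i) (V i j (x j))))"

definition opmat :: "nat \<Rightarrow> (nat \<Rightarrow> nat \<Rightarrow> ('a::hilbert_cx \<Rightarrow> 'a)) \<Rightarrow> bool" where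
  "opmat l V \<longleftrightarrow> (\<forall>i<l. \<forall>j<l. V i j \<in> bop)"

text \<open>(U^l)^* V, where U^l = diag(U,...,U): entries U^* V_ij.\<close>
definition diag_adj_mult :: "('a::hilbert_cx \<Rightarrow> 'a) \<Rightarrow> (nat \<Rightarrow> nat \<Rightarrow> ('a \<Rightarrow> 'a)) \<Rightarrow> (nat \<Rightarrow> nat \<Rightarrow> ('a \<Rightarrow> 'a))" where
  "diag_adj_mult U V = (\<lambda>i j. adj U \<circ> V i j)"

definition bop_linear_map :: "(('a::hilbert_cx \<Rightarrow> 'a) \<Rightarrow> ('b::hilbert_cx \<Rightarrow> 'b)) \<Rightarrow> bool" where
  "bop_linear_map \<phi> \<longleftrightarrow> (\<forall>A\<in>bop. \<phi> A \<in> bop)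
     \<and> (\<forall>A\<in>bop. \<forall>B\<in>bop. \<phi> (\<lambda>x. A x + B x) = (\<lambda>y. \<phi> A y + \<phi> B y))
     \<and> (\<forall>A\<in>bop. \<forall>c. \<phi> (\<lambda>x. scaleC c (A x)) = (\<lambda>y. scaleC c (\<phi> A y)))"

definition completely_positive :: "(('a::hilbert_cx \<Rightarrow> 'a) \<Rightarrow> ('b::hilbert_cx \<Rightarrow> 'b)) \<Rightarrow> bool" where
  "completely_positive \<phi> \<longleftrightarrow> (\<forall>l::nat. \<forall>V. opmat l V \<and> opmat_pos l V
      \<longrightarrow> opmat_pos l (\<lambda>i j. \<phi> (V i j)))"

definition U_CP :: "('a::hilbert_cx \<Rightarrow> 'a) \<Rightarrow> ('b::hilbert_cx \<Rightarrow> 'b) \<Rightarrow> (('a \<Rightarrow> 'a) \<Rightarrow> ('b \<Rightarrow> 'b)) \<Rightarrow> bool" where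
  "U_CP U1 U2 \<phi> \<longleftrightarrow> (\<forall>l::nat. \<forall>V. opmat l V \<and> opmat_pos l (diag_adj_mult U1 V)
      \<longrightarrow> opmat_pos l (diag_adj_mult U2 (\<lambda>i j. \<phi> (V i j))))"

end

theory Submission
  imports Defs
begin


lemma scaleC_zero_left[simp]: "scaleC 0 (x::'a::hilbert_cx) = 0"
proof -
  have "scaleC 0 x = scaleC 0 x + scaleC 0 x" using scaleC_add_left[of 0 0 x] by simp
  then show ?thesis by simp
qed

lemma scaleC_zero_right[simp]: "scaleC a (0::'a::hilbert_cx) = 0"
proof -
  have "scaleC a (0::'a) = scaleC a 0 + scaleC a 0" using scaleC_add_right[of a 0 0] by simp
  then show ?thesis by simp
qed

lemma scaleC_minus_right: "scaleC a (- (x::'a::hilbert_cx)) = - scaleC a x"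
proof -
  have "scaleC a (-x) + scaleC a x = 0" using scaleC_add_right[of a "-x" x] by simp
  then show ?thesis by (simp add: eq_neg_iff_add_eq_0)
qed

lemma scaleC_diff_right: "scaleC a ((x::'a::hilbert_cx) - y) = scaleC a x - scaleC a y"
  using scaleC_add_right[of a x "-y"] scaleC_minus_right by simp

lemma cinner_zero_right[simp]: "cinner (x::'a::hilbert_cx) 0 = 0"
  using cinner_add_right[of x 0 0] by simp

lemma cinner_zero_left[simp]: "cinner 0 (x::'a::hilbert_cx) = 0"
  using cinner_conj[of 0 x] by simp

lemma cinner_add_left: "cinner ((x::'a::hilbert_cx) + y) z = cinner x z + cinner y z"
  using cinner_conj[of "x+y" z] cinner_conj[of x z] cinner_conj[of y z] cinner_add_right[of z x y]
  by simp

lemma cinner_scaleC_left: "cinner (scaleC c (x::'a::hilbert_cx)) y = cnj c * cinner x y"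
  using cinner_conj[of "scaleC c x" y] cinner_conj[of x y] cinner_scaleC_right[of y c x]
  by simp

lemma cinner_minus_right: "cinner (x::'a::hilbert_cx) (- y) = - cinner x y"
proof -
  have "cinner x y + cinner x (- y) = 0" using cinner_add_right[of x y "-y"] by simp
  then show ?thesis by (metis add.commute eq_neg_iff_add_eq_0)
qed

lemma cinner_minus_left: "cinner (- (x::'a::hilbert_cx)) y = - cinner x y"
proof -
  have "cinner x y + cinner (-x) y = 0" using cinner_add_left[of x "-x" y] by simp
  then show ?thesis by (metis add.commute eq_neg_iff_add_eq_0)
qed

lemma cinner_diff_right: "cinner (x::'a::hilbert_cx) (y - z) = cinner x y - cinner x z"
  using cinner_add_right[of x y "-z"] cinner_minus_right by simp

lemma cinner_diff_left: "cinner ((x::'a::hilbert_cx) - y) z = cinner x z - cinner y z"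
  using cinner_add_left[of x "-y" z] cinner_minus_left by simp

lemma cinner_self_Im: "Im (cinner (x::'a::hilbert_cx) x) = 0"
proof -
  have "Im (cinner x x) = Im (cnj (cinner x x))" using cinner_conj[of x x] by simp
  then show ?thesis by simp
qed

lemma cinner_self_real: "cinner (x::'a::hilbert_cx) x = complex_of_real (Re (cinner x x))"
  using cinner_self_Im by (simp add: complex_eq_iff)

lemma cinner_ext: assumes "\<And>x. cinner x a = cinner x (b::'a::hilbert_cx)" shows "a = b"
proof -
  have "cinner (a - b) (a - b) = 0" using assms[of "a-b"] by (simp add: cinner_diff_right)
  then show ?thesis using cinner_eq_zero_iff[of "a-b"] by simp
qed

lemma nsq_expand:
  "Re (cinner ((x::'a::hilbert_cx) + scaleC s y) (x + scaleC s y))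
    = Re (cinner x x) + 2 * Re (s * cinner x y) + (cmod s)^2 * Re (cinner y y)"
proof -
  have "cinner (x + scaleC s y) (x + scaleC s y)
     = cinner x x + cinner (scaleC s y) x + (cinner x (scaleC s y) + cinner (scaleC s y) (scaleC s y))"
    by (simp only: cinner_add_left cinner_add_right)
  also have "\<dots> = cinner x x + cnj s * cinner y x + (s * cinner x y + s * (cnj s * cinner y y))"
    by (simp only: cinner_scaleC_left cinner_scaleC_right)
  finally have e0: "cinner (x + scaleC s y) (x + scaleC s y)
     = cinner x x + cnj s * cinner y x + (s * cinner x y + s * (cnj s * cinner y y))" .
  have c1: "cinner y x = cnj (cinner x y)" by (rule cinner_conj)
  have c2: "s * (cnj s * cinner y y) = complex_of_real ((cmod s)^2) * cinner y y"
    by (subst complex_norm_square) (simp add: mult.commute mult.left_commute)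
  have e: "cinner (x + scaleC s y) (x + scaleC s y)
     = cinner x x + cnj (s * cinner x y) + (s * cinner x y + complex_of_real ((cmod s)^2) * cinner y y)"
    unfolding e0 c1 c2 by simp
  show ?thesis unfolding e by simp
qed

lemma cnorm_sq: "(cnorm (x::'a::hilbert_cx))^2 = Re (cinner x x)"
  unfolding cnorm_def by (rule real_sqrt_pow2[OF cinner_ge_zero])

lemma cnorm_ge0: "0 \<le> cnorm (x::'a::hilbert_cx)" unfolding cnorm_def by (simp add: cinner_ge_zero)

lemma cauchy_schwarz_sq: "(cmod (cinner (x::'a::hilbert_cx) y))^2 \<le> Re (cinner x x) * Re (cinner y y)"
proof (cases "y = 0")
  case True then show ?thesis by simp
next
  case False
  define b where "b = Re (cinner y y)"
  have "cinner y y \<noteq> 0" using False cinner_eq_zero_iff[of y] by simp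
  then have bpos: "b > 0" using cinner_ge_zero[of y] cinner_self_real[of y] unfolding b_def
    by (metis less_eq_real_def of_real_0)
  define w where "w = cinner x y"
  define s where "s = - cnj w / complex_of_real b"
  have "cnj w * w = complex_of_real ((cmod w)^2)"
    by (subst complex_norm_square) (simp add: mult.commute)
  then have sw: "s * w = - complex_of_real ((cmod w)^2 / b)"
    unfolding s_def by simp
  have cs: "(cmod s)^2 = (cmod w)^2 / b^2" unfolding s_def
    using bpos by (simp add: norm_divide power_divide)
  have "0 \<le> Re (cinner (x + scaleC s y) (x + scaleC s y))" by (rule cinner_ge_zero)
  also have "\<dots> = Re (cinner x x) - 2 * ((cmod w)^2 / b) + (cmod w)^2 / b^2 * b"
    unfolding nsq_expand w_def[symmetric] sw cs b_def[symmetric] by simp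
  also have "\<dots> = Re (cinner x x) - (cmod w)^2 / b"
    using bpos by (simp add: power2_eq_square field_simps)
  finally have "(cmod w)^2 / b \<le> Re (cinner x x)" by simp
  then show ?thesis using bpos unfolding w_def b_def by (simp add: field_simps)
qed

lemma cauchy_schwarz: "cmod (cinner (x::'a::hilbert_cx) y) \<le> cnorm x * cnorm y"
proof -
  have "(cmod (cinner x y))^2 \<le> (cnorm x * cnorm y)^2"
    using cauchy_schwarz_sq[of x y] by (simp add: power_mult_distrib cnorm_sq)
  then show ?thesis using cnorm_ge0[of x] cnorm_ge0[of y]
    by (meson mult_nonneg_nonneg power2_le_imp_le)
qed

lemma parallelogram:
  "Re (cinner ((x::'a::hilbert_cx) - y) (x - y)) + Re (cinner (x + y) (x + y)) = 2 * Re (cinner x x) + 2 * Re (cinner y y)"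
  by (simp add: cinner_add_left cinner_add_right cinner_diff_left cinner_diff_right)



lemma nsq_scale: "Re (cinner (scaleC s (y::'a::hilbert_cx)) (scaleC s y)) = (cmod s)^2 * Re (cinner y y)"
  using nsq_expand[of 0 s y] by simp

lemma nsq_minus: "Re (cinner ((x::'a::hilbert_cx) - y) (x - y)) = Re (cinner (y - x) (y - x))"
  by (simp add: cinner_diff_left cinner_diff_right)

lemma cnorm_triangle: "cnorm ((x::'a::hilbert_cx) + y) \<le> cnorm x + cnorm y"
proof -
  have "Re (cinner (x + scaleC 1 y) (x + scaleC 1 y)) = Re (cinner x x) + 2 * Re (cinner x y) + Re (cinner y y)"
    using nsq_expand[of x 1 y] by simp
  moreover have "Re (cinner x y) \<le> cnorm x * cnorm y"
    using cauchy_schwarz[of x y] complex_Re_le_cmod order_trans by blast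
  ultimately have "(cnorm (x + y))^2 \<le> (cnorm x + cnorm y)^2"
    by (simp add: cnorm_sq power2_sum scaleC_one)
  then show ?thesis using cnorm_ge0[of x] cnorm_ge0[of y] by (meson add_nonneg_nonneg power2_le_imp_le)
qed

lemma le0_from_all: assumes "\<And>e::real. e > 0 \<Longrightarrow> a < e" shows "a \<le> 0"
  using assms[of a] by force

lemma riesz:
  fixes f :: "'a::hilbert_cx \<Rightarrow> complex"
  assumes fadd: "\<And>x y. f (x + y) = f x + f y"
    and fhom: "\<And>c x. f (scaleC c x) = c * f x"
    and fbnd: "\<And>x. cmod (f x) \<le> K * cnorm x"
  shows "\<exists>z. \<forall>x. f x = cinner z x"
proof (cases "\<forall>x. f x = 0")
  case True then show ?thesis by (intro exI[of _ 0]) simp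
next
  case False
  then obtain u where fu: "f u \<noteq> 0" by blast
  have f0: "f 0 = 0" using fadd[of 0 0] by simp
  have fdiff: "f (x - y) = f x - f y" for x y
    using fadd[of "x - y" y] by simp
  have fsq: "(cmod (f x))^2 \<le> K^2 * Re (cinner x x)" for x
  proof -
    have "(cmod (f x))^2 \<le> (K * cnorm x)^2"
      using fbnd[of x] by (meson norm_ge_zero power_mono)
    then show ?thesis by (simp add: power_mult_distrib cnorm_sq)
  qed
  define A where "A = {x. f x = 1}"
  define S where "S = (\<lambda>x. Re (cinner x x)) ` A"
  define d where "d = Inf S"
  have u1: "scaleC (inverse (f u)) u \<in> A" unfolding A_def using fu fhom by simp
  have Sne: "S \<noteq> {}" unfolding S_def using u1 by blast
  have Sbdd: "bdd_below S" unfolding S_def using cinner_ge_zero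
    by (intro bdd_belowI[of _ 0]) auto
  have dle: "d \<le> Re (cinner x x)" if "x \<in> A" for x
    unfolding d_def S_def using Sbdd that unfolding S_def by (intro cInf_lower) auto
  have d0: "0 \<le> d" unfolding d_def using Sne
    by (intro cInf_greatest) (auto simp: S_def cinner_ge_zero)
  have "\<forall>n. \<exists>x. x \<in> A \<and> Re (cinner x x) < d + 1 / real (Suc n)"
  proof
    fix n
    have "Inf S < d + 1 / real (Suc n)" unfolding d_def by simp
    from cInf_lessD[OF Sne this] show "\<exists>x. x \<in> A \<and> Re (cinner x x) < d + 1 / real (Suc n)"
      unfolding S_def by auto
  qed
  then obtain X where XA: "\<And>n. X n \<in> A" and Xlt: "\<And>n. Re (cinner (X n) (X n)) < d + 1 / real (Suc n)"
    by metis
  have Xdist: "Re (cinner (X m - X n) (X m - X n)) \<le> 2 / real (Suc m) + 2 / real (Suc n)" for m n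
  proof -
    define mid where "mid = scaleC (1/2) (X m + X n)"
    have "f mid = 1" using XA[of m] XA[of n] unfolding mid_def A_def by (simp add: fhom fadd)
    then have "d \<le> Re (cinner mid mid)" using dle A_def by simp
    moreover have "X m + X n = scaleC 2 mid" unfolding mid_def by (simp add: scaleC_scaleC scaleC_one)
    ultimately have "4 * d \<le> Re (cinner (X m + X n) (X m + X n))"
      using nsq_scale[of 2 mid] by simp
    then show ?thesis using parallelogram[of "X m" "X n"] Xlt[of m] Xlt[of n] by simp
  qed
  have cauchy: "\<forall>e>0. \<exists>N. \<forall>m\<ge>N. \<forall>n\<ge>N. Re (cinner (X m - X n) (X m - X n)) < e"
  proof (intro allI impI)
    fix e :: real assume e: "e > 0"
    obtain N :: nat where N: "4 / e < real N" using reals_Archimedean2 by blast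
    have "\<forall>m\<ge>N. \<forall>n\<ge>N. Re (cinner (X m - X n) (X m - X n)) < e"
    proof (intro allI impI)
      fix m n assume mn: "N \<le> m" "N \<le> n"
      have "2 / real (Suc m) < e / 2"
      proof -
        have "4 < e * real N" using N e by (simp add: field_simps)
        moreover have "real N \<le> real m" using mn by simp
        ultimately have "e * real N \<le> e * real (Suc m)" "4 < e * real N" using e
          by (simp_all add: mult_left_mono)
        then have "4 < e * real (Suc m)" by linarith
        then show ?thesis using e by (simp add: field_simps)
      qed
      moreover have "2 / real (Suc n) < e / 2"
      proof -
        have "4 < e * real N" using N e by (simp add: field_simps)
        moreover have "real N \<le> real n" using mn by simp
        ultimately have "e * real N \<le> e * real (Suc n)" "4 < e * real N" using e
          by (simp_all add: mult_left_mono)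
        then have "4 < e * real (Suc n)" by linarith
        then show ?thesis using e by (simp add: field_simps)
      qed
      ultimately show "Re (cinner (X m - X n) (X m - X n)) < e" using Xdist[of m n] by simp
    qed
    then show "\<exists>N. \<forall>m\<ge>N. \<forall>n\<ge>N. Re (cinner (X m - X n) (X m - X n)) < e" by blast
  qed
  from complete[OF cauchy] obtain L where
    L: "\<And>e. e > 0 \<Longrightarrow> \<exists>N. \<forall>n\<ge>N. Re (cinner (X n - L) (X n - L)) < e" by blast
  have fL: "f L = 1"
  proof -
    have "(cmod (f L - 1))^2 \<le> 0"
    proof (rule le0_from_all)
      fix e :: real assume e: "e > 0"
      define e' where "e' = e / (K^2 + 1)"
      have "0 \<le> K^2" by simp
      then have Kp: "K^2 + 1 > 0" by linarith
      have e': "e' > 0" unfolding e'_def using e Kp by simp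
      obtain N where "\<forall>n\<ge>N. Re (cinner (X n - L) (X n - L)) < e'" using L[OF e'] by blast
      then have lt: "Re (cinner (X N - L) (X N - L)) < e'" by simp
      have "f (X N - L) = 1 - f L" using XA[of N] by (simp add: fdiff A_def)
      then have "(cmod (f L - 1))^2 \<le> K^2 * Re (cinner (X N - L) (X N - L))"
        using fsq[of "X N - L"] by (simp add: norm_minus_commute)
      also have "\<dots> \<le> K^2 * e'" using lt by (simp add: mult_left_mono less_imp_le)
      also have "\<dots> < e" unfolding e'_def using e Kp
        by (simp add: field_simps)
      finally show "(cmod (f L - 1))^2 < e" .
    qed
    then show ?thesis by simp
  qed
  have LA: "L \<in> A" using fL A_def by simp
  have cL: "cnorm L \<le> sqrt d"
  proof (rule ccontr)
    assume "\<not> cnorm L \<le> sqrt d"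
    then have e: "cnorm L - sqrt d > 0" by simp
    define e where "e = cnorm L - sqrt d"
    have ee: "(e/2)^2 > 0" using e e_def by simp
    obtain N1 where N1: "\<forall>n\<ge>N1. Re (cinner (X n - L) (X n - L)) < (e/2)^2" using L[OF ee] by blast
    obtain N2 :: nat where N2: "1 / (e/2)^2 < real N2" using reals_Archimedean2 by blast
    define n where "n = max N1 N2"
    have a1: "Re (cinner (X n - L) (X n - L)) < (e/2)^2" using N1 n_def by simp
    have "1 / (e/2)^2 < real (Suc n)" using N2 n_def by simp
    then have a2: "1 / real (Suc n) < (e/2)^2" using ee
      by (metis divide_less_eq mult.commute of_nat_0_less_iff zero_less_Suc)
    have "cnorm (X n) < sqrt (d + 1 / real (Suc n))"
      unfolding cnorm_def using Xlt[of n] by simp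
    also have "\<dots> \<le> sqrt d + sqrt (1 / real (Suc n))" by (rule sqrt_add_le_add_sqrt) (use d0 in auto)
    also have "\<dots> < sqrt d + e/2"
    proof -
      have "sqrt (1 / real (Suc n)) < sqrt ((e/2)^2)" using a2 by (rule real_sqrt_less_mono)
      then show ?thesis using e e_def by simp
    qed
    finally have b1: "cnorm (X n) < sqrt d + e/2" .
    have b2: "cnorm (L - X n) < e/2"
    proof -
      have "sqrt (Re (cinner (X n - L) (X n - L))) < sqrt ((e/2)^2)" using a1 by (rule real_sqrt_less_mono)
      then show ?thesis unfolding cnorm_def nsq_minus[of L] using e e_def by simp
    qed
    have "cnorm L \<le> cnorm (X n) + cnorm (L - X n)"
      using cnorm_triangle[of "X n" "L - X n"] by simp
    then show False using b1 b2 e_def by simp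
  qed
  have nL: "Re (cinner L L) \<le> d"
  proof -
    have "(cnorm L)^2 \<le> (sqrt d)^2" using cL cnorm_ge0[of L] by (simp add: power_mono)
    then show ?thesis using d0 by (simp add: cnorm_sq)
  qed
  have orth: "cinner L n0 = 0" if fn0: "f n0 = 0" for n0
  proof -
    define w where "w = cinner L n0"
    define q where "q = Re (cinner n0 n0)"
    have q0: "q \<ge> 0" unfolding q_def by (rule cinner_ge_zero)
    define r where "r = 1 / (q + 1)"
    have r0: "r > 0" unfolding r_def using q0 by simp
    have rq: "r * q < 1" unfolding r_def using q0 by (simp add: field_simps)
    define s where "s = - (complex_of_real r * cnj w)"
    have "cnj w * w = complex_of_real ((cmod w)^2)"
      by (subst complex_norm_square) (simp add: mult.commute)
    then have sw: "s * w = - complex_of_real (r * (cmod w)^2)"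
      unfolding s_def by (simp add: mult.assoc)
    have cs: "(cmod s)^2 = r^2 * (cmod w)^2" unfolding s_def using r0
      by (simp add: norm_mult power_mult_distrib)
    have "f (L + scaleC s n0) = 1" using fL fn0 by (simp add: fadd fhom)
    then have "d \<le> Re (cinner (L + scaleC s n0) (L + scaleC s n0))" using dle A_def by simp
    also have "\<dots> = Re (cinner L L) - 2 * (r * (cmod w)^2) + r^2 * (cmod w)^2 * q"
      unfolding nsq_expand w_def[symmetric] sw cs q_def[symmetric] by simp
    finally have "0 \<le> (r * (cmod w)^2) * (r * q - 2)" using nL by (simp add: algebra_simps power2_eq_square)
    moreover have "r * q - 2 < 0" using rq by simp
    ultimately have "r * (cmod w)^2 \<le> 0" by (simp add: mult_le_0_iff zero_le_mult_iff)
    then have "(cmod w)^2 \<le> 0" using r0 by (simp add: mult_le_0_iff)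
    then show ?thesis unfolding w_def by simp
  qed
  have L0: "L \<noteq> 0" using fL f0 by auto
  have LL: "cinner L L \<noteq> 0" using L0 cinner_eq_zero_iff[of L] by simp
  show ?thesis
  proof (intro exI allI)
    fix x
    have "f (x - scaleC (f x) L) = 0" using fL by (simp add: fdiff fhom)
    then have "cinner L (x - scaleC (f x) L) = 0" by (rule orth)
    then have e: "cinner L x = f x * cinner L L" by (simp add: cinner_diff_right cinner_scaleC_right)
    show "f x = cinner (scaleC (inverse (cnj (cinner L L))) L) x"
      unfolding cinner_scaleC_left e using LL by simp
  qed
qed



lemma bop_bound: assumes "A \<in> bop" shows "\<exists>K\<ge>0. \<forall>x. cnorm ((A::'a::hilbert_cx \<Rightarrow> 'a) x) \<le> K * cnorm x"
proof -
  obtain K where K: "\<And>x. cnorm (A x) \<le> K * cnorm x" using assms unfolding bop_def by blast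
  have "cnorm (A x) \<le> max K 0 * cnorm x" for x
    using K[of x] cnorm_ge0[of x] by (meson max.cobounded1 mult_right_mono order_trans)
  then show ?thesis by (intro exI[of _ "max K 0"]) auto
qed

lemma bop_add: "A \<in> bop \<Longrightarrow> A (x + y) = A x + A y" unfolding bop_def by blast
lemma bop_scale: "A \<in> bop \<Longrightarrow> A (scaleC c x) = scaleC c (A x)" unfolding bop_def by blast

lemma bop_comp: assumes "(A::'a::hilbert_cx \<Rightarrow> 'a) \<in> bop" "B \<in> bop" shows "A \<circ> B \<in> bop"
proof -
  obtain KA where KA: "KA \<ge> 0" "\<And>x. cnorm (A x) \<le> KA * cnorm x" using bop_bound[OF assms(1)] by blast
  obtain KB where KB: "\<And>x. cnorm (B x) \<le> KB * cnorm x" using assms(2) unfolding bop_def by blast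
  have "cnorm (A (B x)) \<le> (KA * KB) * cnorm x" for x
  proof -
    have "cnorm (A (B x)) \<le> KA * cnorm (B x)" by (rule KA(2))
    also have "\<dots> \<le> KA * (KB * cnorm x)" using KB[of x] KA(1) by (rule mult_left_mono)
    finally show ?thesis by (simp add: mult.assoc)
  qed
  then show ?thesis using assms unfolding bop_def by auto
qed

lemma adj_exists:
  assumes U: "(U::'a::hilbert_cx \<Rightarrow> 'a) \<in> bop"
  shows "\<exists>B. B \<in> bop \<and> (\<forall>x y. cinner (U x) y = cinner x (B y))"
proof -
  obtain K where K0: "K \<ge> 0" and K: "\<And>x. cnorm (U x) \<le> K * cnorm x" using bop_bound[OF U] by blast
  have "\<forall>y. \<exists>z. \<forall>x. cinner y (U x) = cinner z x"
  proof
    fix y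
    show "\<exists>z. \<forall>x. cinner y (U x) = cinner z x"
    proof (rule riesz[where K = "cnorm y * K"])
      show "cinner y (U (x1 + x2)) = cinner y (U x1) + cinner y (U x2)" for x1 x2
        using U by (simp add: bop_add cinner_add_right)
      show "cinner y (U (scaleC c x)) = c * cinner y (U x)" for c x
        using U by (simp add: bop_scale cinner_scaleC_right)
      show "cmod (cinner y (U x)) \<le> cnorm y * K * cnorm x" for x
      proof -
        have "cmod (cinner y (U x)) \<le> cnorm y * cnorm (U x)" by (rule cauchy_schwarz)
        also have "\<dots> \<le> cnorm y * (K * cnorm x)" using K[of x] cnorm_ge0[of y] by (rule mult_left_mono)
        finally show ?thesis by (simp add: mult.assoc)
      qed
    qed
  qed
  then obtain B where B0: "\<And>x y. cinner y (U x) = cinner (B y) x" by metis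
  have B: "cinner (U x) y = cinner x (B y)" for x y
    using B0[of y x] cinner_conj[of "U x" y] cinner_conj[of x "B y"] by simp
  have Badd: "B (y1 + y2) = B y1 + B y2" for y1 y2
    by (rule cinner_ext) (simp add: B[symmetric] cinner_add_right)
  have Bscale: "B (scaleC c y) = scaleC c (B y)" for c y
    by (rule cinner_ext) (simp add: B[symmetric] cinner_scaleC_right)
  have Bbnd: "cnorm (B y) \<le> K * cnorm y" for y
  proof -
    have "(cnorm (B y))^2 = Re (cinner (U (B y)) y)" by (simp add: cnorm_sq B)
    also have "\<dots> \<le> cmod (cinner (U (B y)) y)" by (rule complex_Re_le_cmod)
    also have "\<dots> \<le> cnorm (U (B y)) * cnorm y" by (rule cauchy_schwarz)
    also have "\<dots> \<le> (K * cnorm (B y)) * cnorm y" using K[of "B y"] cnorm_ge0[of y] by (rule mult_right_mono)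
    finally have h: "cnorm (B y) * cnorm (B y) \<le> cnorm (B y) * (K * cnorm y)"
      by (simp add: power2_eq_square mult_ac)
    show ?thesis
    proof (cases "cnorm (B y) = 0")
      case True then show ?thesis using K0 cnorm_ge0[of y] by simp
    next
      case False then have "cnorm (B y) > 0" using cnorm_ge0[of "B y"] by simp
      then show ?thesis using h by (simp add: mult_le_cancel_left_pos)
    qed
  qed
  have "B \<in> bop" unfolding bop_def using Badd Bscale Bbnd by blast
  then show ?thesis using B by blast
qed

lemma adj_bop: assumes "(U::'a::hilbert_cx \<Rightarrow> 'a) \<in> bop" shows "adj U \<in> bop"
proof -
  have ex: "\<exists>!B. B \<in> bop \<and> (\<forall>x y. cinner (U x) y = cinner x (B y))"
  proof (rule ex_ex1I)
    show "\<exists>B. B \<in> bop \<and> (\<forall>x y. cinner (U x) y = cinner x (B y))" by (rule adj_exists[OF assms])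
  next
    fix B1 B2 assume h: "B1 \<in> bop \<and> (\<forall>x y. cinner (U x) y = cinner x (B1 y))"
      "B2 \<in> bop \<and> (\<forall>x y. cinner (U x) y = cinner x (B2 y))"
    show "B1 = B2"
    proof
      fix y show "B1 y = B2 y" by (rule cinner_ext) (use h in metis)
    qed
  qed
  show ?thesis unfolding adj_def using theI'[OF ex] by blast
qed

lemma opmat_pos_cong:
  assumes "\<And>i j. i < l \<Longrightarrow> j < l \<Longrightarrow> V i j = W i j"
  shows "opmat_pos l V = opmat_pos l W"
proof -
  have "(\<Sum>i<l. \<Sum>j<l. cinner (x i) (V i j (x j))) = (\<Sum>i<l. \<Sum>j<l. cinner (x i) (W i j (x j)))"
    for x :: "nat \<Rightarrow> 'a::hilbert_cx"
    by (intro sum.cong refl) (simp add: assms)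
  then show ?thesis unfolding opmat_pos_def by simp
qed

theorem theorem2p3:
  fixes U1 :: "'a::hilbert_cx \<Rightarrow> 'a" and U2 :: "'b::hilbert_cx \<Rightarrow> 'b"
    and \<phi> :: "('a \<Rightarrow> 'a) \<Rightarrow> ('b \<Rightarrow> 'b)"
  assumes "unitary U1" and "unitary U2"
    and "bop_linear_map \<phi>"
    and "\<forall>V\<in>bop. \<phi> (adj U1 \<circ> V) = adj U2 \<circ> \<phi> V"
    and "\<forall>V\<in>bop. \<phi> (U1 \<circ> V) = U2 \<circ> \<phi> V"
  shows "completely_positive \<phi> \<longleftrightarrow> U_CP U1 U2 \<phi>"
proof
  have U1b: "U1 \<in> bop" and U1i: "adj U1 \<circ> U1 = id" using assms(1) unfolding unitary_def by auto
  have U2i: "adj U2 \<circ> U2 = id" using assms(2) unfolding unitary_def by auto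
  have A1b: "adj U1 \<in> bop" by (rule adj_bop[OF U1b])
  {
    assume CP: "completely_positive \<phi>"
    show "U_CP U1 U2 \<phi>" unfolding U_CP_def
    proof (intro allI impI, elim conjE)
      fix l V assume om: "opmat l V" and pos: "opmat_pos l (diag_adj_mult U1 V)"
      have om2: "opmat l (diag_adj_mult U1 V)" using om unfolding opmat_def diag_adj_mult_def
        by (simp add: bop_comp[OF A1b])
      have "opmat_pos l (\<lambda>i j. \<phi> (diag_adj_mult U1 V i j))"
        using CP[unfolded completely_positive_def, rule_format, of l "diag_adj_mult U1 V"] om2 pos by blast
      moreover have "opmat_pos l (\<lambda>i j. \<phi> (diag_adj_mult U1 V i j)) = opmat_pos l (diag_adj_mult U2 (\<lambda>i j. \<phi> (V i j)))"
      proof (rule opmat_pos_cong)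
        fix i j assume ij: "i < l" "j < l"
        then have "V i j \<in> bop" using om unfolding opmat_def by simp
        then show "\<phi> (diag_adj_mult U1 V i j) = diag_adj_mult U2 (\<lambda>i j. \<phi> (V i j)) i j"
          using assms(4) unfolding diag_adj_mult_def by simp
      qed
      ultimately show "opmat_pos l (diag_adj_mult U2 (\<lambda>i j. \<phi> (V i j)))" by simp
    qed
  }
  {
    assume UCP: "U_CP U1 U2 \<phi>"
    show "completely_positive \<phi>" unfolding completely_positive_def
    proof (intro allI impI, elim conjE)
      fix l and V :: "nat \<Rightarrow> nat \<Rightarrow> 'a \<Rightarrow> 'a"
      assume om: "opmat l V" and pos: "opmat_pos l V"
      define W where "W = (\<lambda>i j. U1 \<circ> V i j)"
      have omW: "opmat l W" using om unfolding opmat_def W_def by (simp add: bop_comp[OF U1b])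
      have "diag_adj_mult U1 W = V" unfolding W_def diag_adj_mult_def
        by (simp add: o_assoc U1i)
      then have "opmat_pos l (diag_adj_mult U1 W)" using pos by simp
      then have "opmat_pos l (diag_adj_mult U2 (\<lambda>i j. \<phi> (W i j)))"
        using UCP[unfolded U_CP_def, rule_format, of l W] omW by blast
      moreover have "opmat_pos l (diag_adj_mult U2 (\<lambda>i j. \<phi> (W i j))) = opmat_pos l (\<lambda>i j. \<phi> (V i j))"
      proof (rule opmat_pos_cong)
        fix i j assume ij: "i < l" "j < l"
        then have "V i j \<in> bop" using om unfolding opmat_def by simp
        then have "\<phi> (U1 \<circ> V i j) = U2 \<circ> \<phi> (V i j)" using assms(5) by simp
        then show "diag_adj_mult U2 (\<lambda>i j. \<phi> (W i j)) i j = \<phi> (V i j)"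
          unfolding diag_adj_mult_def W_def by (simp add: o_assoc U2i)
      qed
      ultimately show "opmat_pos l (\<lambda>i j. \<phi> (V i j))" by simp
    qed
  }
qed

end
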